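(* Assume (A1)–(A3) and the latent index model (LI) below. For any positive definite weighting matrix $W$, $$\beta^*(W)=\sum_{\ell=1}^L\lambda_\ell(W)\mathrm{Wald}_\ell=\int_0^1\mathrm{MTE}(u)\,\bar h(u;\lambda(W))\,du,$$ where $\bar h(u;\omega)=\sum_{\ell=1}^L\omega_\ell h_\ell(u)$, and $\int_0^1\bar h(u;\omega)\,du=1$ for any $\omega\in\mathbb R^L$ with $\sum_\ell\omega_\ell=1$.
   Context: Observe i.i.d. $(Y_i,D_i,\mathbf Z_i)$, $Y_i\in\mathbb R$, $D_i\in\{0,1\}$, $\mathbf Z_i=(Z_{1i},\dots,Z_{Li})'\in\{0,1\}^L$, $L\ge2$; potential outcomes $Y_i(0),Y_i(1)$, compliance type $D_i(\cdot):\{0,1\}^L\to\{0,1\}$, $D_i=D_i(\mathbf Z_i)$, $Y_i=D_iY_i(1)+(1-D_i)Y_i(0)$. $p_\ell=P(Z_{\ell i}=1)$, $\pi_\ell,\rho_\ell$ the differences of $\mathbb E[D_i\mid Z_{\ell i}=z]$, $\mathbb E[Y_i\mid Z_{\ell i}=z]$ between $z=1,0$, $\mathrm{Wald}_\ell=\rho_\ell/\pi_\ell$, $\gamma_\ell=\mathrm{Cov}(D_i,Z_{\ell i})$, $\boldsymbol\gamma=(\gamma_\ell)_\ell$, $\Sigma_Z=\mathrm{Var}(\mathbf Z_i)$. $\lambda_\ell(W)=\gamma_\ell[W\boldsymbol\gamma]_\ell/(\boldsymbol\gamma'W\boldsymbol\gamma)$ and $\beta^*(W)$ is the probability limit of the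 GMM estimator $\arg\min_\beta g_n(\beta)'Wg_n(\beta)$ with $g_{n,\ell}(\beta)=n^{-1}\sum_i(Y_i-\beta D_i)(Z_{\ell i}-\hat p_\ell)$. (LI): $D_i=\mathbf 1\{V(\mathbf Z_i)\ge U_i\}$ for a measurable $V:\{0,1\}^L\to\mathbb R$, with $U_i\sim\mathrm{Uniform}(0,1)$ conditional on potential outcomes (after normalization); then $p(z)=P(D_i=1\mid\mathbf Z_i=z)=V(z)$. $\mathrm{MTE}(u)=\mathbb E[Y_i(1)-Y_i(0)\mid U_i=u]$, and $$h_\ell(u)=\frac{P(p(\mathbf Z_i)\ge u\mid Z_{\ell i}=1)-P(p(\mathbf Z_i)\ge u\mid Z_{\ell i}=0)}{\mathbb E[p(\mathbf Z_i)\mid Z_{\ell i}=1]-\mathbb E[p(\mathbf Z_i)\mid Z_{\ell i}=0]}.$$ Assumptions: (A1) $(Y_i(0),Y_i(1),D_i(\cdot))$ independent of $\mathbf Z_i$. (A2) $D_i(z)$ nondecreasing in each coordinate for every $i$. (A3) $p_\ell>0$, $\pi_\ell>0$ for all $\ell$; $\Sigma_Z$ positive definite. *)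

theory Defs
  imports "HOL-Probability.Probability"
begin

text \<open>Instruments are indexed by 0..<L; a realisation of the instrument vector is
  a function z :: nat => bool (with z l = False for l >= L, i.e. z in {0,1}^L).
  Vectors are nat => real and matrices nat => nat => real, indexed on {0..<L}.\<close>

definition zr :: "bool \<Rightarrow> real" where
  "zr b = (if b then 1 else 0)"

definition in_cube :: "nat \<Rightarrow> (nat \<Rightarrow> bool) \<Rightarrow> bool" where
  "in_cube L z \<longleftrightarrow> (\<forall>l\<ge>L. \<not> z l)"

definition cexp_ev :: "'a measure \<Rightarrow> ('a \<Rightarrow> real) \<Rightarrow> 'a set \<Rightarrow> real" where
  "cexp_ev M X A = (\<integral>\<omega>. indicator A \<omega> * X \<omega> \<partial>M) / measure M A"

definition covar :: "'a measure \<Rightarrow> ('a \<Rightarrow> real) \<Rightarrow> ('a \<Rightarrow> real) \<Rightarrow> real" where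
  "covar M X X' = (\<integral>\<omega>. X \<omega> * X' \<omega> \<partial>M) - (\<integral>\<omega>. X \<omega> \<partial>M) * (\<integral>\<omega>. X' \<omega> \<partial>M)"

definition pos_def_on :: "nat \<Rightarrow> (nat \<Rightarrow> nat \<Rightarrow> real) \<Rightarrow> bool" where
  "pos_def_on L A \<longleftrightarrow> (\<forall>j<L. \<forall>k<L. A j k = A k j) \<and>
     (\<forall>x::nat \<Rightarrow> real. (\<exists>l<L. x l \<noteq> 0) \<longrightarrow> (\<Sum>j<L. \<Sum>k<L. x j * A j k * x k) > 0)"

definition p_inst :: "'a measure \<Rightarrow> ('a \<Rightarrow> nat \<Rightarrow> bool) \<Rightarrow> nat \<Rightarrow> real" where
  "p_inst M Z l = measure M {\<omega> \<in> space M. Z \<omega> l}"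

text \<open>E[X | Z_l = 1] - E[X | Z_l = 0]  (this gives pi_l for X = D and rho_l for X = Y).\<close>
definition diff_inst :: "'a measure \<Rightarrow> ('a \<Rightarrow> nat \<Rightarrow> bool) \<Rightarrow> ('a \<Rightarrow> real) \<Rightarrow> nat \<Rightarrow> real" where
  "diff_inst M Z X l = cexp_ev M X {\<omega> \<in> space M. Z \<omega> l} - cexp_ev M X {\<omega> \<in> space M. \<not> Z \<omega> l}"

definition wald :: "'a measure \<Rightarrow> ('a \<Rightarrow> nat \<Rightarrow> bool) \<Rightarrow> ('a \<Rightarrow> real) \<Rightarrow> ('a \<Rightarrow> real) \<Rightarrow> nat \<Rightarrow> real" where
  "wald M Z Y D l = diff_inst M Z Y l / diff_inst M Z D l"

definition gam :: "'a measure \<Rightarrow> ('a \<Rightarrow> nat \<Rightarrow> bool) \<Rightarrow> ('a \<Rightarrow> real) \<Rightarrow> nat \<Rightarrow> real" where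
  "gam M Z D l = covar M D (\<lambda>\<omega>. zr (Z \<omega> l))"

definition SigmaZ :: "'a measure \<Rightarrow> ('a \<Rightarrow> nat \<Rightarrow> bool) \<Rightarrow> nat \<Rightarrow> nat \<Rightarrow> real" where
  "SigmaZ M Z j k = covar M (\<lambda>\<omega>. zr (Z \<omega> j)) (\<lambda>\<omega>. zr (Z \<omega> k))"

definition lam :: "nat \<Rightarrow> (nat \<Rightarrow> real) \<Rightarrow> (nat \<Rightarrow> nat \<Rightarrow> real) \<Rightarrow> nat \<Rightarrow> real" where
  "lam L g W l = g l * (\<Sum>k<L. W l k * g k) / (\<Sum>j<L. \<Sum>k<L. g j * W j k * g k)"

text \<open>Population GMM moment g_l(beta) = E[(Y - beta D)(Z_l - p_l)], the probability limit
  of the sample moment g_{n,l}(beta), and the population GMM objective.\<close>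
definition gmm_moment :: "'a measure \<Rightarrow> ('a \<Rightarrow> nat \<Rightarrow> bool) \<Rightarrow> ('a \<Rightarrow> real) \<Rightarrow> ('a \<Rightarrow> real) \<Rightarrow> real \<Rightarrow> nat \<Rightarrow> real" where
  "gmm_moment M Z Y D b l = (\<integral>\<omega>. (Y \<omega> - b * D \<omega>) * (zr (Z \<omega> l) - p_inst M Z l) \<partial>M)"

definition gmm_obj :: "nat \<Rightarrow> 'a measure \<Rightarrow> ('a \<Rightarrow> nat \<Rightarrow> bool) \<Rightarrow> ('a \<Rightarrow> real) \<Rightarrow> ('a \<Rightarrow> real) \<Rightarrow> (nat \<Rightarrow> nat \<Rightarrow> real) \<Rightarrow> real \<Rightarrow> real" where
  "gmm_obj L M Z Y D W b = (\<Sum>j<L. \<Sum>k<L. gmm_moment M Z Y D b j * W j k * gmm_moment M Z Y D b k)"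

text \<open>beta^*(W): the (unique) minimiser of the population GMM objective, i.e. the
  probability limit of the GMM estimator.\<close>
definition beta_star :: "nat \<Rightarrow> 'a measure \<Rightarrow> ('a \<Rightarrow> nat \<Rightarrow> bool) \<Rightarrow> ('a \<Rightarrow> real) \<Rightarrow> ('a \<Rightarrow> real) \<Rightarrow> (nat \<Rightarrow> nat \<Rightarrow> real) \<Rightarrow> real" where
  "beta_star L M Z Y D W = (THE b. \<forall>b'. gmm_obj L M Z Y D W b \<le> gmm_obj L M Z Y D W b')"

definition hfun :: "'a measure \<Rightarrow> ('a \<Rightarrow> nat \<Rightarrow> bool) \<Rightarrow> ((nat \<Rightarrow> bool) \<Rightarrow> real) \<Rightarrow> nat \<Rightarrow> real \<Rightarrow> real" where
  "hfun M Z p l u =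
     (cexp_ev M (\<lambda>\<omega>. indicator {\<omega>. p (Z \<omega>) \<ge> u} \<omega>) {\<omega> \<in> space M. Z \<omega> l}
      - cexp_ev M (\<lambda>\<omega>. indicator {\<omega>. p (Z \<omega>) \<ge> u} \<omega>) {\<omega> \<in> space M. \<not> Z \<omega> l})
     / diff_inst M Z (\<lambda>\<omega>. p (Z \<omega>)) l"

definition hbar :: "nat \<Rightarrow> 'a measure \<Rightarrow> ('a \<Rightarrow> nat \<Rightarrow> bool) \<Rightarrow> ((nat \<Rightarrow> bool) \<Rightarrow> real) \<Rightarrow> (nat \<Rightarrow> real) \<Rightarrow> real \<Rightarrow> real" where
  "hbar L M Z p w u = (\<Sum>l<L. w l * hfun M Z p l u)"

end

theory Submission
  imports Defs
begin

lemma transfer_U: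
  assumes P: "prob_space M" and U[measurable]: "U \<in> borel_measurable M"
    and Uu: "distr M borel U = uniform_measure lborel {0..1}"
    and f[measurable]: "f \<in> borel_measurable borel"
  shows "(\<integral>\<omega>. f (U \<omega>) \<partial>M) = (LBINT u=0..1. (f u::real))"
proof -
  have "(\<integral>\<omega>. f (U \<omega>) \<partial>M) = integral\<^sup>L (distr M borel U) f"
    by (subst integral_distr) (auto simp: comp_def)
  also have "\<dots> = integral\<^sup>L (uniform_measure lborel {0..1}) f" by (simp add: Uu)
  also have "uniform_measure lborel {0..1::real} = density lborel (\<lambda>x. ennreal (indicator {0..1} x))"
    unfolding uniform_measure_def by (simp add: ennreal_indicator divide_ennreal_def)
  also have "integral\<^sup>L (density lborel (\<lambda>x. ennreal (indicator {0..1} x))) f = (LBINT u:{0..1}. f u)"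
    by (subst integral_density) (auto simp: set_lebesgue_integral_def)
  also have "\<dots> = (LBINT u=0..1. f u)"
    using interval_integral_Icc[of 0 1 f] by (simp add: zero_ereal_def one_ereal_def)
  finally show ?thesis .
qed

lemma indep_int:
  fixes X :: "'a \<Rightarrow> real \<times> real \<times> real"
  assumes P: "prob_space M" and X[measurable]: "X \<in> borel_measurable M" and S[measurable]: "S \<in> sets M"
    and ind: "\<And>A. A \<in> sets borel \<Longrightarrow> measure M (X -` A \<inter> space M \<inter> S) = measure M (X -` A \<inter> space M) * measure M S"
    and g[measurable]: "g \<in> borel_measurable borel"
  shows "(\<integral>\<omega>. indicator S \<omega> * g (X \<omega>) \<partial>M) = measure M S * (\<integral>\<omega>. g (X \<omega>) \<partial>M)"
proof -
  interpret prob_space M by fact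
  have "(\<integral>\<omega>. indicator S \<omega> * g (X \<omega>) \<partial>M) = integral\<^sup>L (density M (\<lambda>x. ennreal (indicator S x))) (\<lambda>\<omega>. g (X \<omega>))"
    by (subst integral_density) auto
  also have "\<dots> = integral\<^sup>L (distr (density M (\<lambda>x. ennreal (indicator S x))) borel X) g"
    by (subst integral_distr) (auto simp: comp_def)
  also have "distr (density M (\<lambda>x. ennreal (indicator S x))) borel X = density (distr M borel X) (\<lambda>_. ennreal (measure M S))"
  proof (rule measure_eqI)
    fix A assume A: "A \<in> sets (distr (density M (\<lambda>x. ennreal (indicator S x))) borel X)"
    then have A': "A \<in> sets borel" by simp
    have "emeasure (distr (density M (\<lambda>x. ennreal (indicator S x))) borel X) A
        = emeasure (density M (\<lambda>x. ennreal (indicator S x))) (X -` A \<inter> space M)"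
      using A' by (subst emeasure_distr) auto
    also have "\<dots> = (\<integral>\<^sup>+x. ennreal (indicator S x) * indicator (X -` A \<inter> space M) x \<partial>M)"
      using A' by (subst emeasure_density) auto
    also have "\<dots> = (\<integral>\<^sup>+x. indicator (X -` A \<inter> space M \<inter> S) x \<partial>M)"
      by (intro nn_integral_cong) (simp split: split_indicator)
    also have "\<dots> = emeasure M (X -` A \<inter> space M \<inter> S)"
      using A' by (subst nn_integral_indicator) auto
    also have "\<dots> = ennreal (measure M (X -` A \<inter> space M) * measure M S)"
      using A' by (simp add: emeasure_eq_measure ind)
    also have "\<dots> = emeasure (density (distr M borel X) (\<lambda>_. ennreal (measure M S))) A"
      using A' by (simp add: emeasure_density_const emeasure_distr emeasure_eq_measure ennreal_mult mult.commute)
    finally show "emeasure (distr (density M (\<lambda>x. ennreal (indicator S x))) borel X) A = emeasure (density (distr M borel X) (\<lambda>_. ennreal (measure M S))) A" .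
  qed simp
  also have "integral\<^sup>L (density (distr M borel X) (\<lambda>_. ennreal (measure M S))) g = measure M S * integral\<^sup>L (distr M borel X) g"
    by (subst integral_density) auto
  also have "integral\<^sup>L (distr M borel X) g = (\<integral>\<omega>. g (X \<omega>) \<partial>M)"
    by (subst integral_distr) (auto simp: comp_def)
  finally show ?thesis .
qed

lemma cube_finite: "finite {z. in_cube L z}"
proof (rule finite_subset)
  show "{z. in_cube L z} \<subseteq> (\<lambda>S l. l \<in> S) ` Pow {..<L}"
  proof
    fix z assume "z \<in> {z. in_cube L z}"
    then have "\<forall>l. z l \<longrightarrow> l < L" by (auto simp: in_cube_def not_le[symmetric])
    then have "{l. z l} \<in> Pow {..<L}" by auto
    moreover have "z = (\<lambda>l. l \<in> {l. z l})" by auto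
    ultimately show "z \<in> (\<lambda>S l. l \<in> S) ` Pow {..<L}" by blast
  qed
qed auto

lemma decomp:
  fixes X :: "'a \<Rightarrow> real"
  assumes P: "prob_space M" and Zm: "Z \<in> M \<rightarrow>\<^sub>M count_space UNIV" and C: "finite C"
    and ZC: "\<And>\<omega>. \<omega> \<in> space M \<Longrightarrow> Z \<omega> \<in> C" and X: "integrable M X"
  shows "(\<integral>\<omega>. indicator {\<omega>\<in>space M. Q (Z \<omega>)} \<omega> * X \<omega> \<partial>M)
     = (\<Sum>z\<in>C. if Q z then (\<integral>\<omega>. indicator {\<omega>\<in>space M. Z \<omega> = z} \<omega> * X \<omega> \<partial>M) else 0)"
proof -
  have Sm: "{\<omega>\<in>space M. Z \<omega> = z} \<in> sets M" for z
  proof -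
    have "Z -` {z} \<inter> space M \<in> sets M" using Zm by (rule measurable_sets) simp
    moreover have "Z -` {z} \<inter> space M = {\<omega>\<in>space M. Z \<omega> = z}" by auto
    ultimately show ?thesis by simp
  qed
  have "(\<integral>\<omega>. indicator {\<omega>\<in>space M. Q (Z \<omega>)} \<omega> * X \<omega> \<partial>M)
     = (\<integral>\<omega>. (\<Sum>z\<in>C. if Q z then indicator {\<omega>\<in>space M. Z \<omega> = z} \<omega> * X \<omega> else 0) \<partial>M)"
  proof (rule Bochner_Integration.integral_cong[OF refl])
    fix \<omega> assume w: "\<omega> \<in> space M"
    have "(\<Sum>z\<in>C. if Q z then indicator {\<omega>\<in>space M. Z \<omega> = z} \<omega> * X \<omega> else 0)
        = (\<Sum>z\<in>C. if Z \<omega> = z then (if Q (Z \<omega>) then X \<omega> else 0) else 0)"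
      using w by (intro sum.cong refl) (auto split: split_indicator)
    also have "\<dots> = (if Q (Z \<omega>) then X \<omega> else 0)"
      using ZC[OF w] C by (simp add: sum.delta)
    finally show "indicator {\<omega>\<in>space M. Q (Z \<omega>)} \<omega> * X \<omega>
        = (\<Sum>z\<in>C. if Q z then indicator {\<omega>\<in>space M. Z \<omega> = z} \<omega> * X \<omega> else 0)"
      using w by (simp split: split_indicator)
  qed
  also have "\<dots> = (\<Sum>z\<in>C. (\<integral>\<omega>. (if Q z then indicator {\<omega>\<in>space M. Z \<omega> = z} \<omega> * X \<omega> else 0) \<partial>M))"
  proof (rule Bochner_Integration.integral_sum)
    fix z assume "z \<in> C"
    show "integrable M (\<lambda>\<omega>. if Q z then indicator {\<omega>\<in>space M. Z \<omega> = z} \<omega> * X \<omega> else 0)"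
      using integrable_mult_indicator[OF Sm X] by (cases "Q z") auto
  qed
  also have "\<dots> = (\<Sum>z\<in>C. if Q z then (\<integral>\<omega>. indicator {\<omega>\<in>space M. Z \<omega> = z} \<omega> * X \<omega> \<partial>M) else 0)"
  proof (intro sum.cong refl)
    fix z show "(\<integral>\<omega>. (if Q z then indicator {\<omega>\<in>space M. Z \<omega> = z} \<omega> * X \<omega> else 0) \<partial>M)
      = (if Q z then (\<integral>\<omega>. indicator {\<omega>\<in>space M. Z \<omega> = z} \<omega> * X \<omega> \<partial>M) else 0)"
      by (cases "Q z") auto
  qed
  finally show ?thesis .
qed

lemma covar_ind:
  fixes X :: "'a \<Rightarrow> real"
  assumes P: "prob_space M" and A: "A \<in> sets M" and X: "integrable M X"
    and f: "\<And>\<omega>. \<omega> \<in> space M \<Longrightarrow> f \<omega> = indicator A \<omega>"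
    and p0: "0 < measure M A" and p1: "measure M A < 1"
  shows "covar M X f = measure M A * (1 - measure M A) *
     ((\<integral>\<omega>. indicator A \<omega> * X \<omega> \<partial>M) / measure M A - (\<integral>\<omega>. indicator (space M - A) \<omega> * X \<omega> \<partial>M) / measure M (space M - A))"
proof -
  interpret prob_space M by fact
  have c: "measure M (space M - A) = 1 - measure M A" using A by (simp add: prob_compl)
  have e1: "(\<integral>\<omega>. X \<omega> * f \<omega> \<partial>M) = (\<integral>\<omega>. indicator A \<omega> * X \<omega> \<partial>M)"
    by (rule Bochner_Integration.integral_cong) (auto simp: f)
  have e2: "(\<integral>\<omega>. f \<omega> \<partial>M) = measure M A"
  proof -
    have "(\<integral>\<omega>. f \<omega> \<partial>M) = (\<integral>\<omega>. indicator A \<omega> \<partial>M)" by (rule Bochner_Integration.integral_cong) (auto simp: f)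
    then show ?thesis using A sets.sets_into_space[OF A] by (simp add: Int_absorb2)
  qed
  have e3: "(\<integral>\<omega>. X \<omega> \<partial>M) = (\<integral>\<omega>. indicator A \<omega> * X \<omega> \<partial>M) + (\<integral>\<omega>. indicator (space M - A) \<omega> * X \<omega> \<partial>M)"
  proof -
    have "(\<integral>\<omega>. X \<omega> \<partial>M) = (\<integral>\<omega>. indicator A \<omega> * X \<omega> + indicator (space M - A) \<omega> * X \<omega> \<partial>M)"
      by (rule Bochner_Integration.integral_cong) (auto split: split_indicator)
    also have "\<dots> = (\<integral>\<omega>. indicator A \<omega> * X \<omega> \<partial>M) + (\<integral>\<omega>. indicator (space M - A) \<omega> * X \<omega> \<partial>M)"
      using integrable_mult_indicator[OF A X] integrable_mult_indicator[OF _ X, of "space M - A"] A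
      by (intro Bochner_Integration.integral_add) auto
    finally show ?thesis .
  qed
  show ?thesis using p0 p1 unfolding covar_def e1 e2 e3 c
    by (simp add: field_simps)
qed

lemma PU:
  assumes P: "prob_space M" and U[measurable]: "U \<in> borel_measurable M"
    and Uu: "distr M borel U = uniform_measure lborel {0..1}"
    and c: "0 \<le> c" "c \<le> (1::real)"
  shows "(\<integral>\<omega>. (if U \<omega> \<le> c then 1 else 0) \<partial>M) = c"
proof -
  have "(\<integral>\<omega>. (if U \<omega> \<le> c then 1 else 0) \<partial>M) = (\<integral>\<omega>. (indicator {..c} (U \<omega>) :: real) \<partial>M)"
    by (rule Bochner_Integration.integral_cong) (auto split: split_indicator)
  also have "\<dots> = measure (distr M borel U) {..c}"
  proof -
    have "(\<integral>\<omega>. (indicator {..c} (U \<omega>) :: real) \<partial>M) = (\<integral>\<omega>. indicator (U -` {..c} \<inter> space M) \<omega> \<partial>M)"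
      by (rule Bochner_Integration.integral_cong) (auto split: split_indicator)
    then show ?thesis by (simp add: measure_distr)
  qed
  also have "\<dots> = measure (uniform_measure lborel {0..1}) {..c}" by (simp add: Uu)
  also have "\<dots> = measure lborel ({0..1} \<inter> {..c}) / measure lborel {0..1::real}"
    by (rule measure_uniform_measure) auto
  also have "{0..1} \<inter> {..c} = {0..c}" using c by auto
  finally show ?thesis using c by simp
qed

lemma CE:
  fixes f :: "'a \<Rightarrow> real" and U :: "'a \<Rightarrow> real"
  assumes P: "prob_space M" and U[measurable]: "U \<in> borel_measurable M"
    and f: "integrable M f" and MTE[measurable]: "MTE \<in> borel_measurable borel"
    and ae: "AE \<omega> in M. real_cond_exp M (vimage_algebra (space M) U borel) f \<omega> = MTE (U \<omega>)"
  shows "integrable M (\<lambda>\<omega>. MTE (U \<omega>))"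
    and "(\<integral>\<omega>. MTE (U \<omega>) * (if U \<omega> \<le> c then 1 else 0) \<partial>M) = (\<integral>\<omega>. indicator {\<omega>\<in>space M. U \<omega> \<le> c} \<omega> * f \<omega> \<partial>M)"
proof -
  interpret prob_space M by fact
  let ?F = "vimage_algebra (space M) U borel"
  have sets_F: "sets ?F = {U -` A \<inter> space M | A. A \<in> sets borel}"
    by (rule sets_vimage_algebra2) auto
  have sub: "subalgebra M ?F"
    unfolding subalgebra_def
  proof
    show "sets ?F \<subseteq> sets M"
    proof
      fix B assume "B \<in> sets ?F"
      then obtain A where "A \<in> sets borel" "B = U -` A \<inter> space M" unfolding sets_F by blast
      then show "B \<in> sets M" using measurable_sets[OF U] by simp
    qed
  qed simp
  have fm: "finite_measure M" using P unfolding prob_space_def by blast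
  interpret F: finite_measure_subalgebra M ?F
    by (rule finite_measure_subalgebra.intro[OF fm]) (rule finite_measure_subalgebra_axioms.intro[OF sub])
  have ce_int: "integrable M (real_cond_exp M ?F f)" by (rule F.real_cond_exp_int(1)[OF f])
  have cem: "real_cond_exp M ?F f \<in> borel_measurable M" by (rule borel_measurable_cond_exp2)
  show "integrable M (\<lambda>\<omega>. MTE (U \<omega>))"
    using integrable_cong_AE[OF cem _ ae] ce_int by simp
  have B: "{\<omega>\<in>space M. U \<omega> \<le> c} \<in> sets ?F"
  proof -
    have "U -` {..c} \<inter> space M \<in> {U -` A \<inter> space M | A. A \<in> sets borel}"
      by (intro CollectI exI[of _ "{..c}"]) (simp add: atMost_borel)
    then have "U -` {..c} \<inter> space M \<in> sets ?F" unfolding sets_F .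
    moreover have "U -` {..c} \<inter> space M = {\<omega>\<in>space M. U \<omega> \<le> c}" by auto
    ultimately show ?thesis by simp
  qed
  have "(\<integral>\<omega>. indicator {\<omega>\<in>space M. U \<omega> \<le> c} \<omega> * f \<omega> \<partial>M)
      = (\<integral>\<omega>. indicator {\<omega>\<in>space M. U \<omega> \<le> c} \<omega> * real_cond_exp M ?F f \<omega> \<partial>M)"
    using F.real_cond_exp_intA[OF f B] unfolding set_lebesgue_integral_def by simp
  also have "\<dots> = (\<integral>\<omega>. indicator {\<omega>\<in>space M. U \<omega> \<le> c} \<omega> * MTE (U \<omega>) \<partial>M)"
  proof -
    have Bm: "{\<omega>\<in>space M. U \<omega> \<le> c} \<in> sets M" by measurable
    have m1: "(\<lambda>\<omega>. indicator {\<omega>\<in>space M. U \<omega> \<le> c} \<omega> * real_cond_exp M ?F f \<omega>) \<in> borel_measurable M"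
      by (intro borel_measurable_times borel_measurable_indicator Bm cem)
    have m2: "(\<lambda>\<omega>. indicator {\<omega>\<in>space M. U \<omega> \<le> c} \<omega> * MTE (U \<omega>)) \<in> borel_measurable M" by measurable
    show ?thesis by (rule integral_cong_AE[OF m1 m2]) (rule AE_mp[OF ae], auto intro!: AE_I2)
  qed
  also have "\<dots> = (\<integral>\<omega>. MTE (U \<omega>) * (if U \<omega> \<le> c then 1 else 0) \<partial>M)"
    by (rule Bochner_Integration.integral_cong) (auto split: split_indicator)
  finally show "(\<integral>\<omega>. MTE (U \<omega>) * (if U \<omega> \<le> c then 1 else 0) \<partial>M) = (\<integral>\<omega>. indicator {\<omega>\<in>space M. U \<omega> \<le> c} \<omega> * f \<omega> \<partial>M)" ..
qed

lemma alg1: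
  fixes q k :: "'z \<Rightarrow> real"
  assumes "finite C"
  shows "(\<Sum>z\<in>C. if R z then q z * k z else 0) / p1 - (\<Sum>z\<in>C. if \<not> R z then q z * k z else 0) / p0
       = (\<Sum>z\<in>C. (if R z then q z / p1 else - (q z / p0)) * k z)"
proof -
  have "(\<Sum>z\<in>C. if R z then q z * k z else 0) / p1 - (\<Sum>z\<in>C. if \<not> R z then q z * k z else 0) / p0
     = (\<Sum>z\<in>C. (if R z then q z * k z else 0) / p1 - (if \<not> R z then q z * k z else 0) / p0)"
    by (simp only: sum_divide_distrib sum_subtractf)
  also have "\<dots> = (\<Sum>z\<in>C. (if R z then q z / p1 else - (q z / p0)) * k z)"
    by (rule sum.cong) auto
  finally show ?thesis .
qed

lemma sum_mult_delta:
  fixes f :: "nat \<Rightarrow> real"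
  shows "(\<Sum>k\<in>A. f k * (if k = l then 1 else 0)) = (if l \<in> A \<and> finite A then f l else 0)"
proof -
  have "(\<Sum>k\<in>A. f k * (if k = l then 1 else 0)) = (\<Sum>k\<in>A. if k = l then f k else 0)"
    by (rule sum.cong) auto
  also have "\<dots> = (if l \<in> A \<and> finite A then f l else 0)"
    by (cases "finite A") (simp_all add: sum.delta')
  finally show ?thesis .
qed

lemma sum_mult_delta2:
  fixes f :: "nat \<Rightarrow> real"
  shows "(\<Sum>k\<in>A. (if k = l then 1 else 0) * f k) = (if l \<in> A \<and> finite A then f l else 0)"
  using sum_mult_delta[of f l A] by (simp add: mult.commute)

lemma int_dsum:
  fixes h :: "'z \<Rightarrow> 'a \<Rightarrow> real"
  assumes "\<And>z. z \<in> B \<Longrightarrow> integrable M (h z)"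
  shows "(\<integral>\<omega>. (\<Sum>l\<in>A. \<Sum>z\<in>B. k l z * h z \<omega>) \<partial>M) = (\<Sum>l\<in>A. \<Sum>z\<in>B. k l z * integral\<^sup>L M (h z))"
proof -
  have "(\<integral>\<omega>. (\<Sum>l\<in>A. \<Sum>z\<in>B. k l z * h z \<omega>) \<partial>M) = (\<Sum>l\<in>A. \<integral>\<omega>. (\<Sum>z\<in>B. k l z * h z \<omega>) \<partial>M)"
    by (rule Bochner_Integration.integral_sum)
       (auto intro!: Bochner_Integration.integrable_sum Bochner_Integration.integrable_mult_right assms)
  also have "\<dots> = (\<Sum>l\<in>A. \<Sum>z\<in>B. k l z * integral\<^sup>L M (h z))"
  proof (rule sum.cong[OF refl])
    fix l
    have "(\<integral>\<omega>. (\<Sum>z\<in>B. k l z * h z \<omega>) \<partial>M) = (\<Sum>z\<in>B. \<integral>\<omega>. k l z * h z \<omega> \<partial>M)"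
      by (rule Bochner_Integration.integral_sum)
         (auto intro!: Bochner_Integration.integrable_mult_right assms)
    then show "(\<integral>\<omega>. (\<Sum>z\<in>B. k l z * h z \<omega>) \<partial>M) = (\<Sum>z\<in>B. k l z * integral\<^sup>L M (h z))"
      by simp
  qed
  finally show ?thesis .
qed

theorem proposition13:
  fixes L :: nat
    and M :: "'a measure"
    and Y0 Y1 U :: "'a \<Rightarrow> real"
    and Z :: "'a \<Rightarrow> nat \<Rightarrow> bool"
    and V :: "(nat \<Rightarrow> bool) \<Rightarrow> real"
    and D Y :: "'a \<Rightarrow> real"
    and MTE :: "real \<Rightarrow> real"
    and W :: "nat \<Rightarrow> nat \<Rightarrow> real"
  assumes L2: "L \<ge> 2"
    and prob: "prob_space M"
    and Y_meas: "(\<lambda>\<omega>. (Y0 \<omega>, Y1 \<omega>)) \<in> borel_measurable M"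
    and Y0_int: "integrable M Y0" and Y1_int: "integrable M Y1"
    and U_meas: "U \<in> borel_measurable M"
    and U_unif: "distr M borel U = uniform_measure lborel {0..1}"
    and Z_meas: "Z \<in> M \<rightarrow>\<^sub>M count_space UNIV"
    and Z_cube: "\<And>\<omega>. \<omega> \<in> space M \<Longrightarrow> in_cube L (Z \<omega>)"
    and V_range: "\<And>z. in_cube L z \<Longrightarrow> 0 \<le> V z \<and> V z \<le> 1"
    and D_def: "\<And>\<omega>. D \<omega> = (if V (Z \<omega>) \<ge> U \<omega> then 1 else 0)"
    and Y_def: "\<And>\<omega>. Y \<omega> = D \<omega> * Y1 \<omega> + (1 - D \<omega>) * Y0 \<omega>"
    and A1: "\<And>A B. A \<in> sets borel \<Longrightarrow>
         measure M {\<omega> \<in> space M. (Y0 \<omega>, Y1 \<omega>, U \<omega>) \<in> A \<and> Z \<omega> \<in> B}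
       = measure M {\<omega> \<in> space M. (Y0 \<omega>, Y1 \<omega>, U \<omega>) \<in> A} * measure M {\<omega> \<in> space M. Z \<omega> \<in> B}"
    and A2: "\<And>z z'. in_cube L z \<Longrightarrow> in_cube L z' \<Longrightarrow> (\<forall>l<L. z l \<longrightarrow> z' l) \<Longrightarrow> V z \<le> V z'"
    and A3_p: "\<And>l. l < L \<Longrightarrow> p_inst M Z l > 0"
    and A3_pi: "\<And>l. l < L \<Longrightarrow> diff_inst M Z D l > 0"
    and A3_Sigma: "pos_def_on L (SigmaZ M Z)"
    and MTE_meas: "MTE \<in> borel_measurable borel"
    and MTE_def: "AE \<omega> in M. real_cond_exp M (vimage_algebra (space M) U borel) (\<lambda>\<omega>. Y1 \<omega> - Y0 \<omega>) \<omega> = MTE (U \<omega>)"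
    and W_pd: "pos_def_on L W"
  shows "beta_star L M Z Y D W = (\<Sum>l<L. lam L (gam M Z D) W l * wald M Z Y D l)
       \<and> (\<Sum>l<L. lam L (gam M Z D) W l * wald M Z Y D l)
           = (LBINT u=0..1. MTE u * hbar L M Z V (lam L (gam M Z D) W) u)
       \<and> (\<forall>w::nat \<Rightarrow> real. (\<Sum>l<L. w l) = 1 \<longrightarrow> (LBINT u=0..1. hbar L M Z V w u) = 1)"
proof -
  interpret prob_space M by (rule prob)
  define C where "C = {z. in_cube L z}"
  have finC: "finite C" unfolding C_def by (rule cube_finite)
  have ZC: "\<And>\<omega>. \<omega> \<in> space M \<Longrightarrow> Z \<omega> \<in> C" using Z_cube unfolding C_def by simp
  define Sz where "Sz z = {\<omega>\<in>space M. Z \<omega> = z}" for z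
  define q where "q z = measure M (Sz z)" for z
  have Zset: "{\<omega>\<in>space M. Q (Z \<omega>)} \<in> sets M" for Q
  proof -
    have "Z -` {z. Q z} \<inter> space M \<in> sets M" using Z_meas by (rule measurable_sets) simp
    moreover have "Z -` {z. Q z} \<inter> space M = {\<omega>\<in>space M. Q (Z \<omega>)}" by auto
    ultimately show ?thesis by simp
  qed
  have Sz_m: "Sz z \<in> sets M" for z unfolding Sz_def using Zset[of "\<lambda>z'. z' = z"] by simp
  have A1m: "{\<omega>\<in>space M. Z \<omega> l} \<in> sets M" for l using Zset[of "\<lambda>z. z l"] by simp
  have A0m: "{\<omega>\<in>space M. \<not> Z \<omega> l} \<in> sets M" for l using Zset[of "\<lambda>z. \<not> z l"] by simp
  note U_meas[measurable] MTE_meas[measurable]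
  have VZ[measurable]: "(\<lambda>\<omega>. V (Z \<omega>)) \<in> borel_measurable M"
    by (rule measurable_compose[OF Z_meas]) simp
  have Y0m[measurable]: "Y0 \<in> borel_measurable M" using Y0_int by simp
  have Y1m[measurable]: "Y1 \<in> borel_measurable M" using Y1_int by simp
  have Dfun: "D = (\<lambda>\<omega>. if U \<omega> \<le> V (Z \<omega>) then 1 else 0)" by (rule ext) (simp add: D_def)
  have Dm[measurable]: "D \<in> borel_measurable M" unfolding Dfun by measurable
  have Yfun: "\<And>\<omega>. Y \<omega> = Y0 \<omega> + (if U \<omega> \<le> V (Z \<omega>) then Y1 \<omega> - Y0 \<omega> else 0)"
    by (simp add: Y_def D_def algebra_simps)
  have imi: "integrable M (\<lambda>\<omega>. indicator A \<omega> * f \<omega>)" if "A \<in> sets M" "integrable M f" for A and f :: "'a \<Rightarrow> real"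
    using integrable_mult_indicator[OF that] by simp
  have Dint: "integrable M D"
    by (rule integrable_const_bound[where B=1]) (auto simp: D_def intro!: AE_I2 Dm)
  have Y10int: "integrable M (\<lambda>\<omega>. Y1 \<omega> - Y0 \<omega>)"
    by (rule Bochner_Integration.integrable_diff[OF Y1_int Y0_int])
  have DUm: "{\<omega>\<in>space M. U \<omega> \<le> V (Z \<omega>)} \<in> sets M" by measurable
  have Yint: "integrable M Y"
  proof -
    have "integrable M (\<lambda>\<omega>. Y0 \<omega> + indicator {\<omega>\<in>space M. U \<omega> \<le> V (Z \<omega>)} \<omega> * (Y1 \<omega> - Y0 \<omega>))"
      by (rule Bochner_Integration.integrable_add[OF Y0_int imi[OF DUm Y10int]])
    moreover have "integrable M Y \<longleftrightarrow> integrable M (\<lambda>\<omega>. Y0 \<omega> + indicator {\<omega>\<in>space M. U \<omega> \<le> V (Z \<omega>)} \<omega> * (Y1 \<omega> - Y0 \<omega>))"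
      by (rule Bochner_Integration.integrable_cong[OF refl]) (simp add: Yfun split: split_indicator)
    ultimately show ?thesis by simp
  qed
  have intZ: "integrable M (\<lambda>\<omega>. f (Z \<omega>))" if "\<And>z. z \<in> C \<Longrightarrow> \<bar>f z\<bar> \<le> 1" for f :: "(nat \<Rightarrow> bool) \<Rightarrow> real"
  proof (rule integrable_const_bound[where B=1])
    show "AE x in M. norm (f (Z x)) \<le> 1" using that ZC by (intro AE_I2) auto
    show "(\<lambda>\<omega>. f (Z \<omega>)) \<in> borel_measurable M" by (rule measurable_compose[OF Z_meas]) simp
  qed
  define X where "X = (\<lambda>\<omega>. (Y0 \<omega>, Y1 \<omega>, U \<omega>))"
  have Xm[measurable]: "X \<in> borel_measurable M" unfolding X_def by measurable
  have pr1[measurable]: "(\<lambda>t::real\<times>real\<times>real. fst t) \<in> borel_measurable borel"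
    by (intro borel_measurable_continuous_onI continuous_intros)
  have pr2[measurable]: "(\<lambda>t::real\<times>real\<times>real. fst (snd t)) \<in> borel_measurable borel"
    by (intro borel_measurable_continuous_onI continuous_intros)
  have pr3[measurable]: "(\<lambda>t::real\<times>real\<times>real. snd (snd t)) \<in> borel_measurable borel"
    by (intro borel_measurable_continuous_onI continuous_intros)
  have gm: "(\<lambda>t::real\<times>real\<times>real. if snd (snd t) \<le> c then 1 else (0::real)) \<in> borel_measurable borel" for c
  proof -
    have "(\<lambda>x::real. if x \<le> c then 1 else (0::real)) \<in> borel_measurable borel" by measurable
    from measurable_compose[OF pr3 this] show ?thesis by simp
  qed
  have indep: "measure M (X -` A \<inter> space M \<inter> Sz z) = measure M (X -` A \<inter> space M) * measure M (Sz z)"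
    if "A \<in> sets borel" for A z
  proof -
    have e1: "X -` A \<inter> space M \<inter> Sz z = {\<omega> \<in> space M. (Y0 \<omega>, Y1 \<omega>, U \<omega>) \<in> A \<and> Z \<omega> \<in> {z}}"
      by (auto simp: X_def Sz_def)
    have e2: "X -` A \<inter> space M = {\<omega> \<in> space M. (Y0 \<omega>, Y1 \<omega>, U \<omega>) \<in> A}" by (auto simp: X_def)
    have e3: "Sz z = {\<omega> \<in> space M. Z \<omega> \<in> {z}}" by (auto simp: Sz_def)
    show ?thesis by (subst e1, subst e2, subst e3, rule A1[OF that])
  qed
  have Kc: "(\<integral>\<omega>. indicator (Sz z) \<omega> * f (Z \<omega>) \<partial>M) = q z * f z" for z and f :: "(nat \<Rightarrow> bool) \<Rightarrow> real"
  proof -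
    have "(\<integral>\<omega>. indicator (Sz z) \<omega> * f (Z \<omega>) \<partial>M) = (\<integral>\<omega>. f z * indicator (Sz z) \<omega> \<partial>M)"
      by (rule Bochner_Integration.integral_cong) (auto simp: Sz_def split: split_indicator)
    also have "\<dots> = f z * q z"
      using sets.sets_into_space[OF Sz_m[of z]] by (simp add: q_def Int_absorb2)
    finally show ?thesis by simp
  qed
  have KD: "(\<integral>\<omega>. indicator (Sz z) \<omega> * D \<omega> \<partial>M) = q z * V z" if "z \<in> C" for z
  proof -
    let ?g = "\<lambda>t::real\<times>real\<times>real. if snd (snd t) \<le> V z then 1 else (0::real)"
    have "(\<integral>\<omega>. indicator (Sz z) \<omega> * D \<omega> \<partial>M) = (\<integral>\<omega>. indicator (Sz z) \<omega> * ?g (X \<omega>) \<partial>M)"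
      by (rule Bochner_Integration.integral_cong) (auto simp: Sz_def X_def D_def split: split_indicator)
    also have "\<dots> = q z * (\<integral>\<omega>. ?g (X \<omega>) \<partial>M)"
      unfolding q_def by (rule indep_int[OF prob Xm Sz_m indep];
        (assumption | intro borel_measurable_add borel_measurable_times borel_measurable_diff pr1 pr2 gm))
    also have "(\<integral>\<omega>. ?g (X \<omega>) \<partial>M) = (\<integral>\<omega>. (if U \<omega> \<le> V z then 1 else 0) \<partial>M)" by (simp add: X_def)
    also have "\<dots> = V z" using V_range[of z] that by (intro PU[OF prob U_meas U_unif]) (auto simp: C_def)
    finally show ?thesis .
  qed
  define m where "m z = (\<integral>\<omega>. indicator {\<omega>\<in>space M. U \<omega> \<le> V z} \<omega> * (Y1 \<omega> - Y0 \<omega>) \<partial>M)" for z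
  have KY: "(\<integral>\<omega>. indicator (Sz z) \<omega> * Y \<omega> \<partial>M) = q z * ((\<integral>\<omega>. Y0 \<omega> \<partial>M) + m z)" for z
  proof -
    let ?g = "\<lambda>t::real\<times>real\<times>real. fst t + (if snd (snd t) \<le> V z then 1 else 0) * (fst (snd t) - fst t)"
    have "(\<integral>\<omega>. indicator (Sz z) \<omega> * Y \<omega> \<partial>M) = (\<integral>\<omega>. indicator (Sz z) \<omega> * ?g (X \<omega>) \<partial>M)"
      by (rule Bochner_Integration.integral_cong) (auto simp: Sz_def X_def Yfun split: split_indicator)
    also have "\<dots> = q z * (\<integral>\<omega>. ?g (X \<omega>) \<partial>M)"
      unfolding q_def by (rule indep_int[OF prob Xm Sz_m indep];
        (assumption | intro borel_measurable_add borel_measurable_times borel_measurable_diff pr1 pr2 gm))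
    also have "(\<integral>\<omega>. ?g (X \<omega>) \<partial>M) = (\<integral>\<omega>. Y0 \<omega> + indicator {\<omega>\<in>space M. U \<omega> \<le> V z} \<omega> * (Y1 \<omega> - Y0 \<omega>) \<partial>M)"
      by (rule Bochner_Integration.integral_cong) (auto simp: X_def split: split_indicator)
    also have "\<dots> = (\<integral>\<omega>. Y0 \<omega> \<partial>M) + m z" unfolding m_def
    proof (rule Bochner_Integration.integral_add[OF Y0_int imi[OF _ Y10int]])
      show "{\<omega>\<in>space M. U \<omega> \<le> V z} \<in> sets M" by measurable
    qed
    finally show ?thesis .
  qed
  define a where "a l z = (if z l then q z / measure M {\<omega>\<in>space M. Z \<omega> l} else - (q z / measure M {\<omega>\<in>space M. \<not> Z \<omega> l}))" for l z
  have DI: "diff_inst M Z Xf l = (\<Sum>z\<in>C. a l z * k z)"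
    if Xi: "integrable M Xf" and Xk: "\<And>z. z \<in> C \<Longrightarrow> (\<integral>\<omega>. indicator (Sz z) \<omega> * Xf \<omega> \<partial>M) = q z * k z" for Xf k l
  proof -
    have e1: "(\<integral>\<omega>. indicator {\<omega>\<in>space M. Z \<omega> l} \<omega> * Xf \<omega> \<partial>M) = (\<Sum>z\<in>C. if z l then q z * k z else 0)"
    proof -
      have "(\<integral>\<omega>. indicator {\<omega>\<in>space M. Z \<omega> l} \<omega> * Xf \<omega> \<partial>M) = (\<Sum>z\<in>C. if z l then (\<integral>\<omega>. indicator (Sz z) \<omega> * Xf \<omega> \<partial>M) else 0)"
        unfolding Sz_def using decomp[OF prob Z_meas finC ZC Xi, where Q="\<lambda>z. z l"] by simp
      also have "\<dots> = (\<Sum>z\<in>C. if z l then q z * k z else 0)" by (intro sum.cong refl) (simp add: Xk)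
      finally show ?thesis .
    qed
    have e0: "(\<integral>\<omega>. indicator {\<omega>\<in>space M. \<not> Z \<omega> l} \<omega> * Xf \<omega> \<partial>M) = (\<Sum>z\<in>C. if \<not> z l then q z * k z else 0)"
    proof -
      have "(\<integral>\<omega>. indicator {\<omega>\<in>space M. \<not> Z \<omega> l} \<omega> * Xf \<omega> \<partial>M) = (\<Sum>z\<in>C. if \<not> z l then (\<integral>\<omega>. indicator (Sz z) \<omega> * Xf \<omega> \<partial>M) else 0)"
        unfolding Sz_def using decomp[OF prob Z_meas finC ZC Xi, where Q="\<lambda>z. \<not> z l"] by simp
      also have "\<dots> = (\<Sum>z\<in>C. if \<not> z l then q z * k z else 0)" by (intro sum.cong refl) (simp add: Xk)
      finally show ?thesis .
    qed
    show ?thesis unfolding diff_inst_def cexp_ev_def e1 e0 a_def by (rule alg1[OF finC])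
  qed
  have P0eq: "measure M {\<omega>\<in>space M. \<not> Z \<omega> l} = 1 - p_inst M Z l" for l
  proof -
    have "{\<omega>\<in>space M. \<not> Z \<omega> l} = space M - {\<omega>\<in>space M. Z \<omega> l}" by auto
    then show ?thesis using prob_compl[OF A1m[of l]] by (simp add: p_inst_def)
  qed
  have zr_ind: "zr (Z \<omega> l) = indicator {\<omega>\<in>space M. Z \<omega> l} \<omega>" if "\<omega> \<in> space M" for \<omega> l
    using that by (simp add: zr_def split: split_indicator)
  have izr: "(\<integral>\<omega>. zr (Z \<omega> l) \<partial>M) = p_inst M Z l" for l
  proof -
    have "(\<integral>\<omega>. zr (Z \<omega> l) \<partial>M) = (\<integral>\<omega>. indicator {\<omega>\<in>space M. Z \<omega> l} \<omega> \<partial>M)"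
      by (rule Bochner_Integration.integral_cong) (auto simp: zr_ind)
    also have "\<dots> = p_inst M Z l" by (simp add: p_inst_def Collect_conj_eq Int_commute)
    finally show ?thesis .
  qed
  have ppos: "0 < p_inst M Z l" if "l < L" for l using A3_p[OF that] .
  have plt: "p_inst M Z l < 1" if "l < L" for l
  proof -
    let ?x = "\<lambda>j. if j = l then 1 else (0::real)"
    have H: "\<forall>x::nat\<Rightarrow>real. (\<exists>l<L. x l \<noteq> 0) \<longrightarrow> (\<Sum>j<L. \<Sum>k<L. x j * SigmaZ M Z j k * x k) > 0"
      using A3_Sigma unfolding pos_def_on_def by blast
    have "(\<Sum>j<L. \<Sum>k<L. ?x j * SigmaZ M Z j k * ?x k) > 0"
      using H[rule_format, of ?x] that by auto
    moreover have "(\<Sum>j<L. \<Sum>k<L. ?x j * SigmaZ M Z j k * ?x k) = (\<Sum>j<L. if j = l then (\<Sum>k<L. if k = l then SigmaZ M Z l l else 0) else 0)"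
      using that by (auto simp: sum_mult_delta sum_mult_delta2)
    moreover have "\<dots> = SigmaZ M Z l l" using that by simp
    moreover have "(\<integral>\<omega>. zr (Z \<omega> l) * zr (Z \<omega> l) \<partial>M) = (\<integral>\<omega>. zr (Z \<omega> l) \<partial>M)"
      by (rule Bochner_Integration.integral_cong) (auto simp: zr_def)
    ultimately have pos: "p_inst M Z l - p_inst M Z l * p_inst M Z l > 0"
      by (simp add: SigmaZ_def covar_def izr)
    show ?thesis
    proof (rule ccontr)
      assume "\<not> p_inst M Z l < 1"
      then have "1 * p_inst M Z l \<le> p_inst M Z l * p_inst M Z l"
        by (intro mult_right_mono) (use ppos[OF that] in auto)
      then show False using pos by simp
    qed
  qed
  have CV: "covar M Xf (\<lambda>\<omega>. zr (Z \<omega> l)) = p_inst M Z l * (1 - p_inst M Z l) * diff_inst M Z Xf l"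
    if "integrable M Xf" "l < L" for Xf l
  proof -
    have eqs: "space M - {\<omega>\<in>space M. Z \<omega> l} = {\<omega>\<in>space M. \<not> Z \<omega> l}" by auto
    have p0: "0 < measure M {\<omega>\<in>space M. Z \<omega> l}" using ppos[OF that(2)] by (simp add: p_inst_def)
    have p1: "measure M {\<omega>\<in>space M. Z \<omega> l} < 1" using plt[OF that(2)] by (simp add: p_inst_def)
    show ?thesis
      using covar_ind[OF prob A1m[of l] that(1) zr_ind p0 p1]
      unfolding diff_inst_def cexp_ev_def eqs p_inst_def .
  qed
  define g where "g = gam M Z D"
  define c where "c l = covar M Y (\<lambda>\<omega>. zr (Z \<omega> l))" for l
  define pil where "pil l = diff_inst M Z D l" for l
  define rho where "rho l = diff_inst M Z Y l" for l
  have g_eq: "g l = p_inst M Z l * (1 - p_inst M Z l) * pil l" if "l < L" for l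
    unfolding g_def gam_def pil_def by (rule CV[OF Dint that])
  have c_eq: "c l = p_inst M Z l * (1 - p_inst M Z l) * rho l" if "l < L" for l
    unfolding c_def rho_def by (rule CV[OF Yint that])
  have pilpos: "pil l > 0" if "l < L" for l unfolding pil_def by (rule A3_pi[OF that])
  have intz: "integrable M (\<lambda>\<omega>. Xf \<omega> * zr (Z \<omega> l))" if "integrable M Xf" for Xf l
  proof -
    have "integrable M (\<lambda>\<omega>. Xf \<omega> * indicator {\<omega>\<in>space M. Z \<omega> l} \<omega>)"
      by (rule integrable_real_mult_indicator[OF A1m that])
    moreover have "integrable M (\<lambda>\<omega>. Xf \<omega> * zr (Z \<omega> l)) \<longleftrightarrow> integrable M (\<lambda>\<omega>. Xf \<omega> * indicator {\<omega>\<in>space M. Z \<omega> l} \<omega>)"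
      by (rule Bochner_Integration.integrable_cong[OF refl]) (simp add: zr_ind)
    ultimately show ?thesis by simp
  qed
  have mom: "gmm_moment M Z Y D b l = c l - b * g l" if "l < L" for b l
  proof -
    let ?p = "p_inst M Z l"
    have "gmm_moment M Z Y D b l = (\<integral>\<omega>. (Y \<omega> * zr (Z \<omega> l) - ?p * Y \<omega>) - b * (D \<omega> * zr (Z \<omega> l) - ?p * D \<omega>) \<partial>M)"
      unfolding gmm_moment_def by (rule Bochner_Integration.integral_cong) (simp_all add: algebra_simps)
    also have "\<dots> = ((\<integral>\<omega>. Y \<omega> * zr (Z \<omega> l) \<partial>M) - ?p * (\<integral>\<omega>. Y \<omega> \<partial>M)) - b * ((\<integral>\<omega>. D \<omega> * zr (Z \<omega> l) \<partial>M) - ?p * (\<integral>\<omega>. D \<omega> \<partial>M))"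
      using intz[OF Yint, of l] intz[OF Dint, of l] Yint Dint
      by (simp add: Bochner_Integration.integral_diff Bochner_Integration.integrable_diff Bochner_Integration.integrable_mult_right)
    finally show ?thesis unfolding c_def g_def gam_def covar_def izr by (simp add: algebra_simps)
  qed
  have Wsym: "W j k = W k j" if "j < L" "k < L" for j k using W_pd that unfolding pos_def_on_def by blast
  define G where "G = (\<Sum>j<L. \<Sum>k<L. g j * W j k * g k)"
  define B where "B = (\<Sum>j<L. \<Sum>k<L. g j * W j k * c k)"
  define Q0 where "Q0 = (\<Sum>j<L. \<Sum>k<L. c j * W j k * c k)"
  have Bsym: "(\<Sum>j<L. \<Sum>k<L. c j * W j k * g k) = B"
  proof -
    have "(\<Sum>j<L. \<Sum>k<L. c j * W j k * g k) = (\<Sum>k<L. \<Sum>j<L. c j * W j k * g k)" by (rule sum.swap)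
    also have "\<dots> = B" unfolding B_def by (intro sum.cong refl) (simp add: Wsym mult_ac)
    finally show ?thesis .
  qed
  have obj: "gmm_obj L M Z Y D W b = Q0 - b * (\<Sum>j<L. \<Sum>k<L. c j * W j k * g k) - b * B + b^2 * G" for b
  proof -
    have "gmm_obj L M Z Y D W b = (\<Sum>j<L. \<Sum>k<L. c j * W j k * c k - b * (c j * W j k * g k) - b * (g j * W j k * c k) + b^2 * (g j * W j k * g k))"
      unfolding gmm_obj_def by (intro sum.cong refl) (simp add: mom power2_eq_square algebra_simps)
    also have "\<dots> = Q0 - b * (\<Sum>j<L. \<Sum>k<L. c j * W j k * g k) - b * B + b^2 * G"
      unfolding Q0_def B_def G_def by (simp add: sum.distrib sum_subtractf sum_distrib_left)
    finally show ?thesis .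
  qed
  have L0: "0 < L" using L2 by simp
  have g0: "g 0 > 0"
  proof -
    have "0 < p_inst M Z 0 * (1 - p_inst M Z 0) * pil 0"
      using ppos[OF L0] plt[OF L0] pilpos[OF L0] by (intro mult_pos_pos) auto
    then show ?thesis using g_eq[OF L0] by simp
  qed
  have "\<exists>l<L. g l \<noteq> 0" using L0 g0 by force
  then have Gpos: "G > 0" using W_pd unfolding pos_def_on_def G_def by blast
  define b0 where "b0 = B / G"
  have objsq: "gmm_obj L M Z Y D W b = gmm_obj L M Z Y D W b0 + G * (b - b0)^2" for b
    unfolding obj Bsym b0_def using Gpos by (simp add: field_simps power2_eq_square)
  have beta: "beta_star L M Z Y D W = b0"
    unfolding beta_star_def
  proof (rule the_equality)
    show "\<forall>b'. gmm_obj L M Z Y D W b0 \<le> gmm_obj L M Z Y D W b'"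
    proof
      fix b'
      have "0 \<le> G * (b' - b0)^2" using Gpos by simp
      then show "gmm_obj L M Z Y D W b0 \<le> gmm_obj L M Z Y D W b'" using objsq[of b'] by linarith
    qed
  next
    fix x assume "\<forall>b'. gmm_obj L M Z Y D W x \<le> gmm_obj L M Z Y D W b'"
    then have "gmm_obj L M Z Y D W x \<le> gmm_obj L M Z Y D W b0" by blast
    then have "G * (x - b0)^2 \<le> 0" using objsq[of x] by linarith
    then have "(x - b0)^2 \<le> 0" using Gpos by (simp add: mult_le_0_iff)
    then show "x = b0" by simp
  qed
  have lamwald: "lam L g W l * wald M Z Y D l = (\<Sum>k<L. c l * W l k * g k) / G" if "l < L" for l
  proof -
    have gr: "g l * (rho l / pil l) = c l" unfolding g_eq[OF that] c_eq[OF that] using pilpos[OF that] by (simp add: field_simps)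
    have "lam L g W l * wald M Z Y D l = (g l * (rho l / pil l)) * (\<Sum>k<L. W l k * g k) / G"
      unfolding lam_def wald_def G_def rho_def pil_def by (simp only: divide_inverse mult_ac)
    also have "\<dots> = c l * (\<Sum>k<L. W l k * g k) / G" using gr by simp
    also have "\<dots> = (\<Sum>k<L. c l * W l k * g k) / G" by (simp add: sum_distrib_left mult_ac)
    finally show ?thesis .
  qed
  have sum1: "(\<Sum>l<L. lam L g W l * wald M Z Y D l) = B / G"
  proof -
    have "(\<Sum>l<L. lam L g W l * wald M Z Y D l) = (\<Sum>l<L. (\<Sum>k<L. c l * W l k * g k) / G)"
      by (rule sum.cong) (auto simp: lamwald)
    also have "\<dots> = (\<Sum>l<L. \<Sum>k<L. c l * W l k * g k) / G" by (simp add: sum_divide_distrib)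
    finally show ?thesis using Bsym by simp
  qed
  have sa0: "(\<Sum>z\<in>C. a l z) = 0" if "l < L" for l
  proof -
    have "diff_inst M Z (\<lambda>_. 1) l = (\<Sum>z\<in>C. a l z * 1)"
      by (rule DI) (use Kc[of _ "\<lambda>_. 1"] in simp_all)
    moreover have "diff_inst M Z (\<lambda>_. 1) l = 0"
    proof -
      have i1: "{\<omega>\<in>space M. Z \<omega> l} \<inter> space M = {\<omega>\<in>space M. Z \<omega> l}" by auto
      have i0: "{\<omega>\<in>space M. \<not> Z \<omega> l} \<inter> space M = {\<omega>\<in>space M. \<not> Z \<omega> l}" by auto
      have "measure M {\<omega>\<in>space M. Z \<omega> l} > 0" using ppos[OF that] by (simp add: p_inst_def)
      moreover have "measure M {\<omega>\<in>space M. \<not> Z \<omega> l} > 0" using plt[OF that] P0eq[of l] by simp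
      ultimately show ?thesis unfolding diff_inst_def cexp_ev_def by (simp add: i1 i0)
    qed
    ultimately show ?thesis by simp
  qed
  have DV: "diff_inst M Z D l = (\<Sum>z\<in>C. a l z * V z)" for l by (rule DI[OF Dint]) (rule KD)
  have DVZ: "diff_inst M Z (\<lambda>\<omega>. V (Z \<omega>)) l = (\<Sum>z\<in>C. a l z * V z)" for l
  proof (rule DI)
    show "integrable M (\<lambda>\<omega>. V (Z \<omega>))" by (rule intZ) (use V_range in \<open>auto simp: C_def abs_le_iff\<close>)
  qed (rule Kc)
  have DYm: "diff_inst M Z Y l = (\<Sum>z\<in>C. a l z * m z)" if "l < L" for l
  proof -
    have "diff_inst M Z Y l = (\<Sum>z\<in>C. a l z * ((\<integral>\<omega>. Y0 \<omega> \<partial>M) + m z))" by (rule DI[OF Yint]) (rule KY)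
    also have "\<dots> = (\<integral>\<omega>. Y0 \<omega> \<partial>M) * (\<Sum>z\<in>C. a l z) + (\<Sum>z\<in>C. a l z * m z)"
      by (simp add: algebra_simps sum.distrib sum_distrib_left)
    finally show ?thesis using sa0[OF that] by simp
  qed
  define bb where "bb l z = a l z / pil l" for l z
  have sbV: "(\<Sum>z\<in>C. bb l z * V z) = 1" if "l < L" for l
    using pilpos[OF that] unfolding bb_def pil_def DV by (simp add: sum_divide_distrib[symmetric])
  have waldeq: "wald M Z Y D l = (\<Sum>z\<in>C. bb l z * m z)" if "l < L" for l
    unfolding wald_def DYm[OF that] bb_def pil_def by (simp add: sum_divide_distrib)
  have hfun_eq: "hfun M Z V l u = (\<Sum>z\<in>C. bb l z * (if u \<le> V z then 1 else 0))" if "l < L" for l u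
  proof -
    have Xeq: "(\<lambda>\<omega>. indicator {\<omega>. u \<le> V (Z \<omega>)} \<omega> :: real) = (\<lambda>\<omega>. (if u \<le> V (Z \<omega>) then 1 else 0))"
      by (rule ext) (simp split: split_indicator)
    have num: "diff_inst M Z (\<lambda>\<omega>. (if u \<le> V (Z \<omega>) then 1 else 0)) l = (\<Sum>z\<in>C. a l z * (if u \<le> V z then 1 else 0))"
    proof (rule DI)
      show "integrable M (\<lambda>\<omega>. (if u \<le> V (Z \<omega>) then 1 else 0 :: real))"
        using intZ[of "\<lambda>z. if u \<le> V z then 1 else 0"] by simp
    next
      fix z show "(\<integral>\<omega>. indicator (Sz z) \<omega> * (if u \<le> V (Z \<omega>) then 1 else 0) \<partial>M) = q z * (if u \<le> V z then 1 else 0)"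
        using Kc[of z "\<lambda>z. if u \<le> V z then 1 else 0"] by simp
    qed
    have "hfun M Z V l u = diff_inst M Z (\<lambda>\<omega>. (if u \<le> V (Z \<omega>) then 1 else 0)) l / diff_inst M Z (\<lambda>\<omega>. V (Z \<omega>)) l"
      unfolding hfun_def diff_inst_def Xeq ..
    also have "\<dots> = (\<Sum>z\<in>C. bb l z * (if u \<le> V z then 1 else 0))"
      unfolding num DVZ bb_def pil_def DV by (simp add: sum_divide_distrib)
    finally show ?thesis .
  qed
  have hbar_eq: "hbar L M Z V w = (\<lambda>u. \<Sum>l<L. \<Sum>z\<in>C. (w l * bb l z) * (if u \<le> V z then 1 else 0))" for w
  proof (rule ext)
    fix u show "hbar L M Z V w u = (\<Sum>l<L. \<Sum>z\<in>C. (w l * bb l z) * (if u \<le> V z then 1 else 0))"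
      unfolding hbar_def by (rule sum.cong) (simp_all add: hfun_eq sum_distrib_left mult.assoc)
  qed
  have indm: "integrable M (\<lambda>\<omega>. (if U \<omega> \<le> c0 then 1 else 0 :: real))" for c0
  proof (rule integrable_const_bound[where B=1])
    show "AE x in M. norm (if U x \<le> c0 then 1 else 0 :: real) \<le> 1" by (intro AE_I2) simp
    show "(\<lambda>\<omega>. (if U \<omega> \<le> c0 then 1 else 0 :: real)) \<in> borel_measurable M" by measurable
  qed
  have MTEint: "integrable M (\<lambda>\<omega>. MTE (U \<omega>))" by (rule CE(1)[OF prob U_meas Y10int MTE_meas MTE_def])
  have intMz: "integrable M (\<lambda>\<omega>. MTE (U \<omega>) * (if U \<omega> \<le> c0 then 1 else 0))" for c0
  proof -
    have Bm: "{\<omega>\<in>space M. U \<omega> \<le> c0} \<in> sets M" by measurable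
    have "integrable M (\<lambda>\<omega>. MTE (U \<omega>) * indicator {\<omega>\<in>space M. U \<omega> \<le> c0} \<omega>)"
      by (rule integrable_real_mult_indicator[OF Bm MTEint])
    moreover have "integrable M (\<lambda>\<omega>. MTE (U \<omega>) * (if U \<omega> \<le> c0 then 1 else 0)) \<longleftrightarrow> integrable M (\<lambda>\<omega>. MTE (U \<omega>) * indicator {\<omega>\<in>space M. U \<omega> \<le> c0} \<omega>)"
      by (rule Bochner_Integration.integrable_cong[OF refl]) (simp split: split_indicator)
    ultimately show ?thesis by simp
  qed
  have CEm: "(\<integral>\<omega>. MTE (U \<omega>) * (if U \<omega> \<le> V z then 1 else 0) \<partial>M) = m z" for z
    unfolding m_def by (rule CE(2)[OF prob U_meas Y10int MTE_meas MTE_def])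
  have conj2: "(\<Sum>l<L. lam L g W l * wald M Z Y D l) = (LBINT u=0..1. MTE u * hbar L M Z V (lam L g W) u)"
  proof -
    let ?lv = "lam L g W"
    have "(LBINT u=0..1. MTE u * hbar L M Z V ?lv u)
        = (LBINT u=0..1. (\<Sum>l<L. \<Sum>z\<in>C. (?lv l * bb l z) * (MTE u * (if u \<le> V z then 1 else 0))))"
      unfolding hbar_eq by (simp add: sum_distrib_left mult_ac)
    also have "\<dots> = (\<integral>\<omega>. (\<Sum>l<L. \<Sum>z\<in>C. (?lv l * bb l z) * (MTE (U \<omega>) * (if U \<omega> \<le> V z then 1 else 0))) \<partial>M)"
      by (rule transfer_U[OF prob U_meas U_unif, symmetric]) measurable
    also have "\<dots> = (\<Sum>l<L. \<Sum>z\<in>C. (?lv l * bb l z) * (\<integral>\<omega>. MTE (U \<omega>) * (if U \<omega> \<le> V z then 1 else 0) \<partial>M))"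
      by (rule int_dsum) (rule intMz)
    also have "\<dots> = (\<Sum>l<L. ?lv l * (\<Sum>z\<in>C. bb l z * m z))"
      by (simp add: CEm sum_distrib_left mult_ac)
    also have "\<dots> = (\<Sum>l<L. ?lv l * wald M Z Y D l)"
      by (rule sum.cong) (simp_all add: waldeq)
    finally show ?thesis ..
  qed
  have conj3: "(LBINT u=0..1. hbar L M Z V w u) = 1" if "(\<Sum>l<L. w l) = 1" for w
  proof -
    have "(LBINT u=0..1. hbar L M Z V w u)
        = (LBINT u=0..1. (\<Sum>l<L. \<Sum>z\<in>C. (w l * bb l z) * (if u \<le> V z then 1 else 0)))"
      unfolding hbar_eq ..
    also have "\<dots> = (\<integral>\<omega>. (\<Sum>l<L. \<Sum>z\<in>C. (w l * bb l z) * (if U \<omega> \<le> V z then 1 else 0)) \<partial>M)"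
      by (rule transfer_U[OF prob U_meas U_unif, symmetric]) measurable
    also have "\<dots> = (\<Sum>l<L. \<Sum>z\<in>C. (w l * bb l z) * (\<integral>\<omega>. (if U \<omega> \<le> V z then 1 else 0) \<partial>M))"
      by (rule int_dsum) (rule indm)
    also have "\<dots> = (\<Sum>l<L. \<Sum>z\<in>C. (w l * bb l z) * V z)"
    proof (intro sum.cong refl)
      fix l z assume "z \<in> C"
      then have "(\<integral>\<omega>. (if U \<omega> \<le> V z then 1 else 0) \<partial>M) = V z"
        using V_range[of z] by (intro PU[OF prob U_meas U_unif]) (auto simp: C_def)
      then show "(w l * bb l z) * (\<integral>\<omega>. (if U \<omega> \<le> V z then 1 else 0) \<partial>M) = (w l * bb l z) * V z" by simp
    qed
    also have "\<dots> = (\<Sum>l<L. w l * (\<Sum>z\<in>C. bb l z * V z))"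
      by (simp add: sum_distrib_left mult_ac)
    also have "\<dots> = (\<Sum>l<L. w l)"
      by (rule sum.cong) (simp_all add: sbV)
    finally show ?thesis using that by simp
  qed
  show ?thesis unfolding g_def[symmetric] using beta sum1 conj2 conj3 unfolding b0_def by auto
qed

end
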